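(* For no traffic pattern in a multicast switch does the enhanced conflict graph contain an induced subgraph isomorphic to the Grötzsch graph.
   Context: A flow is $(i,J)$ with input $i$ and nonempty fanout set $J$ of outputs; a traffic pattern is a finite set of flows; subflows are $(i,J,j)$ with $j\in J$. Enhanced conflict graph: one vertex per subflow; distinct subflows $(i,J,j),(i',J',j')$ adjacent iff $j=j'$, or $i=i'$ and $J\ne J'$. The Grötzsch graph is the 11-vertex triangle-free graph with chromatic number 4 obtained by applying the Mycielski construction to the 5-cycle. *)

theory Defs
  imports Main
begin

text \<open>A flow is a pair (i, J): an input i and a nonempty (finite) fanout set J of outputs.
A traffic pattern is a finite set of flows.\<close>

definition is_flow :: "'i \<times> 'o set \<Rightarrow> bool" where
  "is_flow f \<longleftrightarrow> snd f \<noteq> {} \<and> finite (snd f)"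

definition traffic_pattern :: "('i \<times> 'o set) set \<Rightarrow> bool" where
  "traffic_pattern T \<longleftrightarrow> finite T \<and> (\<forall>f\<in>T. is_flow f)"

text \<open>Subflows (i, J, j) with (i, J) a flow of T and j in J: the vertices of the
enhanced conflict graph.\<close>

definition subflows :: "('i \<times> 'o set) set \<Rightarrow> ('i \<times> 'o set \<times> 'o) set" where
  "subflows T = {(i, J, j). (i, J) \<in> T \<and> j \<in> J}"

definition ecg_adj :: "('i \<times> 'o set \<times> 'o) \<Rightarrow> ('i \<times> 'o set \<times> 'o) \<Rightarrow> bool" where
  "ecg_adj s t \<longleftrightarrow> s \<noteq> t \<and>
     (case s of (i, J, j) \<Rightarrow> case t of (i', J', j') \<Rightarrow>
        j = j' \<or> (i = i' \<and> J \<noteq> J'))"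

text \<open>The Groetzsch graph = Mycielskian of the 5-cycle, on vertices 0..10:
0..4 the cycle u_k, 5..9 the shadow vertices w_k (w_k adjacent to the cycle-neighbours
of u_k), and 10 the apex z adjacent to all w_k.\<close>

definition groetzsch_edge :: "nat \<Rightarrow> nat \<Rightarrow> bool" where
  "groetzsch_edge a b \<longleftrightarrow>
     (a < 5 \<and> b < 5 \<and> (b = (a + 1) mod 5 \<or> a = (b + 1) mod 5)) \<or>
     (a < 5 \<and> 5 \<le> b \<and> b < 10 \<and> (a = (b - 5 + 1) mod 5 \<or> b - 5 = (a + 1) mod 5)) \<or>
     (b < 5 \<and> 5 \<le> a \<and> a < 10 \<and> (b = (a - 5 + 1) mod 5 \<or> a - 5 = (b + 1) mod 5)) \<or>
     (a = 10 \<and> 5 \<le> b \<and> b < 10) \<or>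
     (b = 10 \<and> 5 \<le> a \<and> a < 10)"

definition groetzsch_vertices :: "nat set" where
  "groetzsch_vertices = {0..10}"

definition ecg_has_induced_groetzsch :: "('i \<times> 'o set) set \<Rightarrow> bool" where
  "ecg_has_induced_groetzsch T \<longleftrightarrow>
     (\<exists>f. inj_on f groetzsch_vertices \<and> f ` groetzsch_vertices \<subseteq> subflows T \<and>
        (\<forall>a\<in>groetzsch_vertices. \<forall>b\<in>groetzsch_vertices.
           a \<noteq> b \<longrightarrow> (groetzsch_edge a b \<longleftrightarrow> ecg_adj (f a) (f b))))"

end

theory Submission
  imports Defs
begin

lemma core:
  fixes q :: "nat \<Rightarrow> 'c" and i :: "nat \<Rightarrow> 'a" and J :: "nat \<Rightarrow> 'b"
  assumes "q 0 = q 1 \<or> (i 0 = i 1 \<and> J 0 \<noteq> J 1)"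
    and "q 0 \<noteq> q 2 \<and> (i 0 = i 2 \<longrightarrow> J 0 = J 2)"
    and "q 0 \<noteq> q 3 \<and> (i 0 = i 3 \<longrightarrow> J 0 = J 3)"
    and "q 0 = q 4 \<or> (i 0 = i 4 \<and> J 0 \<noteq> J 4)"
    and "q 0 \<noteq> q 5 \<and> (i 0 = i 5 \<longrightarrow> J 0 = J 5)"
    and "q 0 = q 6 \<or> (i 0 = i 6 \<and> J 0 \<noteq> J 6)"
    and "q 0 \<noteq> q 7 \<and> (i 0 = i 7 \<longrightarrow> J 0 = J 7)"
    and "q 0 \<noteq> q 8 \<and> (i 0 = i 8 \<longrightarrow> J 0 = J 8)"
    and "q 0 = q 9 \<or> (i 0 = i 9 \<and> J 0 \<noteq> J 9)"
    and "q 0 \<noteq> q 10 \<and> (i 0 = i 10 \<longrightarrow> J 0 = J 10)"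
    and "q 1 = q 2 \<or> (i 1 = i 2 \<and> J 1 \<noteq> J 2)"
    and "q 1 \<noteq> q 3 \<and> (i 1 = i 3 \<longrightarrow> J 1 = J 3)"
    and "q 1 \<noteq> q 4 \<and> (i 1 = i 4 \<longrightarrow> J 1 = J 4)"
    and "q 1 = q 5 \<or> (i 1 = i 5 \<and> J 1 \<noteq> J 5)"
    and "q 1 \<noteq> q 6 \<and> (i 1 = i 6 \<longrightarrow> J 1 = J 6)"
    and "q 1 = q 7 \<or> (i 1 = i 7 \<and> J 1 \<noteq> J 7)"
    and "q 1 \<noteq> q 8 \<and> (i 1 = i 8 \<longrightarrow> J 1 = J 8)"
    and "q 1 \<noteq> q 9 \<and> (i 1 = i 9 \<longrightarrow> J 1 = J 9)"
    and "q 1 \<noteq> q 10 \<and> (i 1 = i 10 \<longrightarrow> J 1 = J 10)"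
    and "q 2 = q 3 \<or> (i 2 = i 3 \<and> J 2 \<noteq> J 3)"
    and "q 2 \<noteq> q 4 \<and> (i 2 = i 4 \<longrightarrow> J 2 = J 4)"
    and "q 2 \<noteq> q 5 \<and> (i 2 = i 5 \<longrightarrow> J 2 = J 5)"
    and "q 2 = q 6 \<or> (i 2 = i 6 \<and> J 2 \<noteq> J 6)"
    and "q 2 \<noteq> q 7 \<and> (i 2 = i 7 \<longrightarrow> J 2 = J 7)"
    and "q 2 = q 8 \<or> (i 2 = i 8 \<and> J 2 \<noteq> J 8)"
    and "q 2 \<noteq> q 9 \<and> (i 2 = i 9 \<longrightarrow> J 2 = J 9)"
    and "q 2 \<noteq> q 10 \<and> (i 2 = i 10 \<longrightarrow> J 2 = J 10)"
    and "q 3 = q 4 \<or> (i 3 = i 4 \<and> J 3 \<noteq> J 4)"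
    and "q 3 \<noteq> q 5 \<and> (i 3 = i 5 \<longrightarrow> J 3 = J 5)"
    and "q 3 \<noteq> q 6 \<and> (i 3 = i 6 \<longrightarrow> J 3 = J 6)"
    and "q 3 = q 7 \<or> (i 3 = i 7 \<and> J 3 \<noteq> J 7)"
    and "q 3 \<noteq> q 8 \<and> (i 3 = i 8 \<longrightarrow> J 3 = J 8)"
    and "q 3 = q 9 \<or> (i 3 = i 9 \<and> J 3 \<noteq> J 9)"
    and "q 3 \<noteq> q 10 \<and> (i 3 = i 10 \<longrightarrow> J 3 = J 10)"
    and "q 4 = q 5 \<or> (i 4 = i 5 \<and> J 4 \<noteq> J 5)"
    and "q 4 \<noteq> q 6 \<and> (i 4 = i 6 \<longrightarrow> J 4 = J 6)"
    and "q 4 \<noteq> q 7 \<and> (i 4 = i 7 \<longrightarrow> J 4 = J 7)"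
    and "q 4 = q 8 \<or> (i 4 = i 8 \<and> J 4 \<noteq> J 8)"
    and "q 4 \<noteq> q 9 \<and> (i 4 = i 9 \<longrightarrow> J 4 = J 9)"
    and "q 4 \<noteq> q 10 \<and> (i 4 = i 10 \<longrightarrow> J 4 = J 10)"
    and "q 5 \<noteq> q 6 \<and> (i 5 = i 6 \<longrightarrow> J 5 = J 6)"
    and "q 5 \<noteq> q 7 \<and> (i 5 = i 7 \<longrightarrow> J 5 = J 7)"
    and "q 5 \<noteq> q 8 \<and> (i 5 = i 8 \<longrightarrow> J 5 = J 8)"
    and "q 5 \<noteq> q 9 \<and> (i 5 = i 9 \<longrightarrow> J 5 = J 9)"
    and "q 5 = q 10 \<or> (i 5 = i 10 \<and> J 5 \<noteq> J 10)"
    and "q 6 \<noteq> q 7 \<and> (i 6 = i 7 \<longrightarrow> J 6 = J 7)"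
    and "q 6 \<noteq> q 8 \<and> (i 6 = i 8 \<longrightarrow> J 6 = J 8)"
    and "q 6 \<noteq> q 9 \<and> (i 6 = i 9 \<longrightarrow> J 6 = J 9)"
    and "q 6 = q 10 \<or> (i 6 = i 10 \<and> J 6 \<noteq> J 10)"
    and "q 7 \<noteq> q 8 \<and> (i 7 = i 8 \<longrightarrow> J 7 = J 8)"
    and "q 7 \<noteq> q 9 \<and> (i 7 = i 9 \<longrightarrow> J 7 = J 9)"
    and "q 7 = q 10 \<or> (i 7 = i 10 \<and> J 7 \<noteq> J 10)"
    and "q 8 \<noteq> q 9 \<and> (i 8 = i 9 \<longrightarrow> J 8 = J 9)"
    and "q 8 = q 10 \<or> (i 8 = i 10 \<and> J 8 \<noteq> J 10)"
    and "q 9 = q 10 \<or> (i 9 = i 10 \<and> J 9 \<noteq> J 10)"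
  shows False
  using assms by smt

theorem corollary1:
  fixes T :: "('i \<times> 'o set) set"
  assumes "traffic_pattern T"
  shows "\<not> ecg_has_induced_groetzsch T"
proof
  assume "ecg_has_induced_groetzsch T"
  then obtain f where inj: "inj_on f groetzsch_vertices" and "f ` groetzsch_vertices \<subseteq> subflows T"
    and adj: "\<forall>a\<in>groetzsch_vertices. \<forall>b\<in>groetzsch_vertices.
           a \<noteq> b \<longrightarrow> (groetzsch_edge a b \<longleftrightarrow> ecg_adj (f a) (f b))"
    unfolding ecg_has_induced_groetzsch_def by (elim exE conjE) (rule that)
  define i where "i k = fst (f k)" for k
  define J where "J k = fst (snd (f k))" for k
  define q where "q k = snd (snd (f k))" for k
  have key: "groetzsch_edge a b \<longleftrightarrow> (q a = q b \<or> (i a = i b \<and> J a \<noteq> J b))"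
    if "a \<le> 10" "b \<le> 10" "a \<noteq> b" for a b
  proof -
    have m: "a \<in> groetzsch_vertices" "b \<in> groetzsch_vertices"
      using that by (auto simp: groetzsch_vertices_def)
    have ne: "f a \<noteq> f b" using inj m that(3) by (meson inj_on_def)
    have "groetzsch_edge a b \<longleftrightarrow> ecg_adj (f a) (f b)" using adj m that(3) by blast
    also have "\<dots> \<longleftrightarrow> (q a = q b \<or> (i a = i b \<and> J a \<noteq> J b))"
      using ne unfolding ecg_adj_def i_def J_def q_def
      by (cases "f a"; cases "f b") auto
    finally show ?thesis .
  qed
  show False
    apply (rule core[of q i J])
    subgoal using key[of 0 1] by (simp add: groetzsch_edge_def)
    subgoal using key[of 0 2] by (simp add: groetzsch_edge_def)
    subgoal using key[of 0 3] by (simp add: groetzsch_edge_def)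
    subgoal using key[of 0 4] by (simp add: groetzsch_edge_def)
    subgoal using key[of 0 5] by (simp add: groetzsch_edge_def)
    subgoal using key[of 0 6] by (simp add: groetzsch_edge_def)
    subgoal using key[of 0 7] by (simp add: groetzsch_edge_def)
    subgoal using key[of 0 8] by (simp add: groetzsch_edge_def)
    subgoal using key[of 0 9] by (simp add: groetzsch_edge_def)
    subgoal using key[of 0 10] by (simp add: groetzsch_edge_def)
    subgoal using key[of 1 2] by (simp add: groetzsch_edge_def)
    subgoal using key[of 1 3] by (simp add: groetzsch_edge_def)
    subgoal using key[of 1 4] by (simp add: groetzsch_edge_def)
    subgoal using key[of 1 5] by (simp add: groetzsch_edge_def)
    subgoal using key[of 1 6] by (simp add: groetzsch_edge_def)
    subgoal using key[of 1 7] by (simp add: groetzsch_edge_def)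
    subgoal using key[of 1 8] by (simp add: groetzsch_edge_def)
    subgoal using key[of 1 9] by (simp add: groetzsch_edge_def)
    subgoal using key[of 1 10] by (simp add: groetzsch_edge_def)
    subgoal using key[of 2 3] by (simp add: groetzsch_edge_def)
    subgoal using key[of 2 4] by (simp add: groetzsch_edge_def)
    subgoal using key[of 2 5] by (simp add: groetzsch_edge_def)
    subgoal using key[of 2 6] by (simp add: groetzsch_edge_def)
    subgoal using key[of 2 7] by (simp add: groetzsch_edge_def)
    subgoal using key[of 2 8] by (simp add: groetzsch_edge_def)
    subgoal using key[of 2 9] by (simp add: groetzsch_edge_def)
    subgoal using key[of 2 10] by (simp add: groetzsch_edge_def)
    subgoal using key[of 3 4] by (simp add: groetzsch_edge_def)
    subgoal using key[of 3 5] by (simp add: groetzsch_edge_def)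
    subgoal using key[of 3 6] by (simp add: groetzsch_edge_def)
    subgoal using key[of 3 7] by (simp add: groetzsch_edge_def)
    subgoal using key[of 3 8] by (simp add: groetzsch_edge_def)
    subgoal using key[of 3 9] by (simp add: groetzsch_edge_def)
    subgoal using key[of 3 10] by (simp add: groetzsch_edge_def)
    subgoal using key[of 4 5] by (simp add: groetzsch_edge_def)
    subgoal using key[of 4 6] by (simp add: groetzsch_edge_def)
    subgoal using key[of 4 7] by (simp add: groetzsch_edge_def)
    subgoal using key[of 4 8] by (simp add: groetzsch_edge_def)
    subgoal using key[of 4 9] by (simp add: groetzsch_edge_def)
    subgoal using key[of 4 10] by (simp add: groetzsch_edge_def)
    subgoal using key[of 5 6] by (simp add: groetzsch_edge_def)
    subgoal using key[of 5 7] by (simp add: groetzsch_edge_def)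
    subgoal using key[of 5 8] by (simp add: groetzsch_edge_def)
    subgoal using key[of 5 9] by (simp add: groetzsch_edge_def)
    subgoal using key[of 5 10] by (simp add: groetzsch_edge_def)
    subgoal using key[of 6 7] by (simp add: groetzsch_edge_def)
    subgoal using key[of 6 8] by (simp add: groetzsch_edge_def)
    subgoal using key[of 6 9] by (simp add: groetzsch_edge_def)
    subgoal using key[of 6 10] by (simp add: groetzsch_edge_def)
    subgoal using key[of 7 8] by (simp add: groetzsch_edge_def)
    subgoal using key[of 7 9] by (simp add: groetzsch_edge_def)
    subgoal using key[of 7 10] by (simp add: groetzsch_edge_def)
    subgoal using key[of 8 9] by (simp add: groetzsch_edge_def)
    subgoal using key[of 8 10] by (simp add: groetzsch_edge_def)
    subgoal using key[of 9 10] by (simp add: groetzsch_edge_def)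
    done
qed

end
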